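(* Let $(X,Y)$ be a random pair with $X\in\mathbb{R}^d$ and $Y\in\{+1,-1\}$ with arbitrary joint distribution, and let $p_1(x)=\Pr(Y=+1\mid X=x)$. Let $\alpha\in[0,1)$ and let $\varphi$ be one of the losses $\varphi_{\mathrm{LR}},\varphi_{\mathrm{LS},\alpha},\varphi_{\mathrm{MLS},\alpha},\varphi_{\mathrm{LSQ}}$, with $\phi(v,y)=\varphi(yv)$. Let $\bar g\in\operatorname{argmin}_{g:\mathbb{R}^d\to\mathbb{R}}\mathbb{E}[\phi(g(X),Y)]$. Then $\frac{1}{1+e^{-\bar g(x)}}=p_1(x)$ for almost every $x$ (with respect to the distribution of $X$) when $\varphi\in\{\varphi_{\mathrm{LR}},\varphi_{\mathrm{MLS},\alpha},\varphi_{\mathrm{LSQ}}\}$, and $s_\alpha^{-1}\big(\frac{1}{1+e^{-\bar g(x)}}\big)=p_1(x)$ for almost every $x$ when $\varphi=\varphi_{\mathrm{LS},\alpha}$.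
   Context: The losses are: $\varphi_{\mathrm{LR}}(v)=-\ln\frac{1}{1+e^{-v}}$; $\varphi_{\mathrm{LS},\alpha}(v)=-(1-\frac{\alpha}{2})\ln\frac{1}{1+e^{-v}}-\frac{\alpha}{2}\ln\frac{1}{1+e^{v}}$; $\varphi_{\mathrm{MLS},\alpha}(v)=-(1-\frac{\alpha}{2})\ln\big(\frac{1-\alpha}{1+e^{-v}}+\frac{\alpha}{2}\big)-\frac{\alpha}{2}\ln\big(\frac{1-\alpha}{1+e^{v}}+\frac{\alpha}{2}\big)$; $\varphi_{\mathrm{LSQ}}(v)=\frac{1}{2(1+e^{v})^2}$. Here $s_\alpha(u)=(1-\alpha)u+\frac{\alpha}{2}$ and $s_\alpha^{-1}(u)=(u-\frac{\alpha}{2})/(1-\alpha)$. The minimization is over measurable functions $g$. *)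

theory Defs
  imports "HOL-Probability.Probability"
begin

definition sigmoid :: "real \<Rightarrow> real" where
  "sigmoid v = 1 / (1 + exp (- v))"

definition phi_LR :: "real \<Rightarrow> real" where
  "phi_LR v = - ln (1 / (1 + exp (- v)))"

definition phi_LS :: "real \<Rightarrow> real \<Rightarrow> real" where
  "phi_LS \<alpha> v = - (1 - \<alpha>/2) * ln (1 / (1 + exp (- v))) - (\<alpha>/2) * ln (1 / (1 + exp v))"

definition phi_MLS :: "real \<Rightarrow> real \<Rightarrow> real" where
  "phi_MLS \<alpha> v = - (1 - \<alpha>/2) * ln ((1 - \<alpha>) / (1 + exp (- v)) + \<alpha>/2)
                   - (\<alpha>/2) * ln ((1 - \<alpha>) / (1 + exp v) + \<alpha>/2)"

definition phi_LSQ :: "real \<Rightarrow> real" where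
  "phi_LSQ v = 1 / (2 * (1 + exp v)^2)"

definition s_alpha :: "real \<Rightarrow> real \<Rightarrow> real" where
  "s_alpha \<alpha> u = (1 - \<alpha>) * u + \<alpha>/2"

definition s_alpha_inv :: "real \<Rightarrow> real \<Rightarrow> real" where
  "s_alpha_inv \<alpha> u = (u - \<alpha>/2) / (1 - \<alpha>)"

text \<open>Expected surrogate risk E[phi(g(X),Y)] with phi(v,y) = varphi(y v).
  All four losses are nonnegative, so the nonnegative integral is used.\<close>
definition risk :: "'s measure \<Rightarrow> ('s \<Rightarrow> 'x) \<Rightarrow> ('s \<Rightarrow> real) \<Rightarrow> (real \<Rightarrow> real) \<Rightarrow> ('x \<Rightarrow> real) \<Rightarrow> ennreal" where
  "risk M X Y \<phi> g = (\<integral>\<^sup>+ \<omega>. ennreal (\<phi> (Y \<omega> * g (X \<omega>))) \<partial>M)"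

text \<open>p1 is a (version of the) conditional probability Pr(Y = +1 | X = x).\<close>
definition is_cond_prob_pos :: "'s measure \<Rightarrow> ('s \<Rightarrow> 'x::topological_space) \<Rightarrow> ('s \<Rightarrow> real) \<Rightarrow> ('x \<Rightarrow> real) \<Rightarrow> bool" where
  "is_cond_prob_pos M X Y p1 \<longleftrightarrow>
     p1 \<in> borel_measurable borel \<and> (\<forall>x. 0 \<le> p1 x \<and> p1 x \<le> 1) \<and>
     (\<forall>A \<in> sets borel. measure M {\<omega> \<in> space M. X \<omega> \<in> A \<and> Y \<omega> = 1}
                        = (\<integral>x\<in>A. p1 x \<partial>(distr M borel X)))"

end

theory Submission
  imports Defs
begin


lemma cond_density:
  fixes X :: "'s \<Rightarrow> 'x::topological_space" and f :: "'x \<Rightarrow> ennreal"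
  assumes P: "prob_space M" and Xm: "X \<in> borel_measurable M" and S: "S \<in> sets M"
    and qm: "q \<in> borel_measurable borel" and q01: "\<forall>x. 0 \<le> q x \<and> q x \<le> 1"
    and eq: "\<forall>A \<in> sets borel. measure M {\<omega> \<in> space M. X \<omega> \<in> A \<and> \<omega> \<in> S} = (\<integral>x\<in>A. q x \<partial>(distr M borel X))"
    and fm: "f \<in> borel_measurable borel"
  shows "(\<integral>\<^sup>+\<omega>. indicator S \<omega> * f (X \<omega>) \<partial>M) = (\<integral>\<^sup>+x. ennreal (q x) * f x \<partial>(distr M borel X))"
proof -
  interpret prob_space M by fact
  let ?N = "density M (indicator S)"
  let ?P = "distr M borel X"
  interpret PX: prob_space ?P using Xm by (simp add: prob_space_distr)
  have Sm: "(indicator S :: 's \<Rightarrow> ennreal) \<in> borel_measurable M" using S by simp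
  have Xm': "X \<in> measurable ?N borel" using Xm by simp
  have D: "distr ?N borel X = density ?P q"
  proof (rule measure_eqI)
    show "sets (distr ?N borel X) = sets (density ?P q)" by simp
  next
    fix A assume "A \<in> sets (distr ?N borel X)"
    then have A: "A \<in> sets borel" by simp
    have "emeasure (distr ?N borel X) A = emeasure ?N (X -` A \<inter> space M)"
      using Xm' A by (simp add: emeasure_distr)
    also have "\<dots> = (\<integral>\<^sup>+\<omega>. indicator S \<omega> * indicator (X -` A \<inter> space M) \<omega> \<partial>M)"
      using Sm A Xm by (intro emeasure_density) (auto intro: measurable_sets)
    also have "\<dots> = (\<integral>\<^sup>+\<omega>. indicator {\<omega> \<in> space M. X \<omega> \<in> A \<and> \<omega> \<in> S} \<omega> \<partial>M)"
      by (intro nn_integral_cong) (auto split: split_indicator)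
    also have "\<dots> = emeasure M {\<omega> \<in> space M. X \<omega> \<in> A \<and> \<omega> \<in> S}"
    proof (rule nn_integral_indicator)
      have "{\<omega> \<in> space M. X \<omega> \<in> A \<and> \<omega> \<in> S} = (X -` A \<inter> space M) \<inter> S" by auto
      then show "{\<omega> \<in> space M. X \<omega> \<in> A \<and> \<omega> \<in> S} \<in> sets M"
        using A Xm S by (auto intro: measurable_sets)
    qed
    also have "\<dots> = ennreal (measure M {\<omega> \<in> space M. X \<omega> \<in> A \<and> \<omega> \<in> S})"
      by (simp add: emeasure_eq_measure)
    also have "\<dots> = ennreal (\<integral>x\<in>A. q x \<partial>?P)" using eq A by simp
    also have "\<dots> = (\<integral>\<^sup>+x\<in>A. q x \<partial>?P)"
    proof (rule nn_set_integral_eq_set_integral[symmetric])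
      show "integrable ?P q"
        using qm q01 by (intro PX.integrable_const_bound[where B=1]) auto
      show "AE x\<in>A in ?P. 0 \<le> q x" using q01 by simp
      show "A \<in> sets ?P" using A by simp
    qed
    also have "\<dots> = emeasure (density ?P q) A"
      using A qm by (subst emeasure_density) (auto simp: mult.commute)
    finally show "emeasure (distr ?N borel X) A = emeasure (density ?P q) A" .
  qed
  have "(\<integral>\<^sup>+\<omega>. indicator S \<omega> * f (X \<omega>) \<partial>M) = (\<integral>\<^sup>+\<omega>. f (X \<omega>) \<partial>?N)"
    using Sm fm Xm by (subst nn_integral_density) auto
  also have "\<dots> = (\<integral>\<^sup>+x. f x \<partial>distr ?N borel X)"
    using Xm' fm by (subst nn_integral_distr) auto
  also have "\<dots> = (\<integral>\<^sup>+x. f x \<partial>density ?P q)" by (simp add: D)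
  also have "\<dots> = (\<integral>\<^sup>+x. ennreal (q x) * f x \<partial>?P)"
    using qm fm by (subst nn_integral_density) auto
  finally show ?thesis .
qed

lemma neg_eq:
  fixes X :: "'s \<Rightarrow> 'x::topological_space"
  assumes P: "prob_space M" and Xm: "X \<in> borel_measurable M" and Ym: "Y \<in> borel_measurable M"
    and Y: "\<forall>\<omega>\<in>space M. Y \<omega> = 1 \<or> Y \<omega> = -1"
    and cp: "is_cond_prob_pos M X Y p1"
  shows "\<forall>A \<in> sets borel. measure M {\<omega> \<in> space M. X \<omega> \<in> A \<and> \<omega> \<in> {\<omega> \<in> space M. Y \<omega> = -1}} = (\<integral>x\<in>A. (1 - p1 x) \<partial>(distr M borel X))"
proof
  interpret prob_space M by fact
  let ?P = "distr M borel X"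
  interpret PX: prob_space ?P using Xm by (simp add: prob_space_distr)
  fix A :: "'x set" assume A: "A \<in> sets borel"
  have p1m: "p1 \<in> borel_measurable borel" and p01: "\<forall>x. 0 \<le> p1 x \<and> p1 x \<le> 1"
    and e1: "measure M {\<omega> \<in> space M. X \<omega> \<in> A \<and> Y \<omega> = 1} = (\<integral>x\<in>A. p1 x \<partial>?P)"
    using cp A unfolding is_cond_prob_pos_def by auto
  let ?S1 = "{\<omega> \<in> space M. X \<omega> \<in> A \<and> Y \<omega> = 1}"
  let ?S2 = "{\<omega> \<in> space M. X \<omega> \<in> A \<and> \<omega> \<in> {\<omega> \<in> space M. Y \<omega> = -1}}"
  have s1: "?S1 \<in> sets M" using A Xm Ym by measurable
  have s2: "?S2 \<in> sets M" using A Xm Ym by measurable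
  have un: "?S1 \<union> ?S2 = X -` A \<inter> space M" using Y by auto
  have dj: "?S1 \<inter> ?S2 = {}" by auto
  have "measure M (X -` A \<inter> space M) = measure M ?S1 + measure M ?S2"
    using finite_measure_Union[OF s1 s2 dj] un by simp
  moreover have "measure M (X -` A \<inter> space M) = measure ?P A"
    using A Xm by (simp add: measure_distr)
  moreover have "measure ?P A = (\<integral>x\<in>A. 1 \<partial>?P)"
    using A by (subst set_integral_const) auto
  moreover have si1: "set_integrable ?P A (\<lambda>x. 1::real)"
    unfolding set_integrable_def using A
    by (intro PX.integrable_const_bound[where B=1]) (auto split: split_indicator)
  moreover have si2: "set_integrable ?P A p1"
    unfolding set_integrable_def using A p1m p01
    by (intro PX.integrable_const_bound[where B=1]) (auto split: split_indicator)
  moreover have "(\<integral>x\<in>A. (1 - p1 x) \<partial>?P) = (\<integral>x\<in>A. 1 \<partial>?P) - (\<integral>x\<in>A. p1 x \<partial>?P)"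
    using set_integral_diff(2)[OF si1 si2] by simp
  ultimately show "measure M ?S2 = (\<integral>x\<in>A. (1 - p1 x) \<partial>?P)" using e1 by linarith
qed

lemma risk_reduce:
  fixes X :: "'s \<Rightarrow> 'x::topological_space"
  assumes P: "prob_space M" and Xm: "X \<in> borel_measurable M" and Ym: "Y \<in> borel_measurable M"
    and Y: "\<forall>\<omega>\<in>space M. Y \<omega> = 1 \<or> Y \<omega> = -1"
    and cp: "is_cond_prob_pos M X Y p1"
    and \<phi>m: "\<phi> \<in> borel_measurable borel" and \<phi>0: "\<forall>v. 0 \<le> \<phi> v"
    and hm: "h \<in> borel_measurable borel"
  shows "risk M X Y \<phi> h = (\<integral>\<^sup>+x. ennreal (p1 x * \<phi> (h x) + (1 - p1 x) * \<phi> (- h x)) \<partial>distr M borel X)"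
proof -
  let ?P = "distr M borel X"
  let ?S1 = "{\<omega> \<in> space M. Y \<omega> = 1}"
  let ?S2 = "{\<omega> \<in> space M. Y \<omega> = -1}"
  have p1m: "p1 \<in> borel_measurable borel" and p01: "\<forall>x. 0 \<le> p1 x \<and> p1 x \<le> 1"
    and e1: "\<forall>A \<in> sets borel. measure M {\<omega> \<in> space M. X \<omega> \<in> A \<and> Y \<omega> = 1} = (\<integral>x\<in>A. p1 x \<partial>?P)"
    using cp unfolding is_cond_prob_pos_def by auto
  have e1': "\<forall>A \<in> sets borel. measure M {\<omega> \<in> space M. X \<omega> \<in> A \<and> \<omega> \<in> ?S1} = (\<integral>x\<in>A. p1 x \<partial>?P)"
  proof
    fix A :: "'x set" assume A: "A \<in> sets borel"
    have eq: "{\<omega> \<in> space M. X \<omega> \<in> A \<and> \<omega> \<in> ?S1} = {\<omega> \<in> space M. X \<omega> \<in> A \<and> Y \<omega> = 1}" by auto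
    show "measure M {\<omega> \<in> space M. X \<omega> \<in> A \<and> \<omega> \<in> ?S1} = (\<integral>x\<in>A. p1 x \<partial>?P)"
      unfolding eq using e1 A by blast
  qed
  note e2 = neg_eq[OF P Xm Ym Y cp]
  have S1: "?S1 \<in> sets M" using Ym by measurable
  have S2: "?S2 \<in> sets M" using Ym by measurable
  note [measurable] = Xm Ym \<phi>m hm p1m S1 S2
  have f1m: "(\<lambda>x. ennreal (\<phi> (h x))) \<in> borel_measurable borel" using \<phi>m hm by measurable
  have f2m: "(\<lambda>x. ennreal (\<phi> (- h x))) \<in> borel_measurable borel" using \<phi>m hm by measurable
  have q2m: "(\<lambda>x. 1 - p1 x) \<in> borel_measurable borel" using p1m by measurable
  have "risk M X Y \<phi> h = (\<integral>\<^sup>+\<omega>. indicator ?S1 \<omega> * ennreal (\<phi> (h (X \<omega>))) + indicator ?S2 \<omega> * ennreal (\<phi> (- h (X \<omega>))) \<partial>M)"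
    unfolding risk_def
  proof (rule nn_integral_cong)
    fix \<omega> assume "\<omega> \<in> space M"
    then show "ennreal (\<phi> (Y \<omega> * h (X \<omega>))) = indicator ?S1 \<omega> * ennreal (\<phi> (h (X \<omega>))) + indicator ?S2 \<omega> * ennreal (\<phi> (- h (X \<omega>)))"
      using Y by (auto simp: indicator_def)
  qed
  also have "\<dots> = (\<integral>\<^sup>+\<omega>. indicator ?S1 \<omega> * ennreal (\<phi> (h (X \<omega>))) \<partial>M) + (\<integral>\<^sup>+\<omega>. indicator ?S2 \<omega> * ennreal (\<phi> (- h (X \<omega>))) \<partial>M)"
    by (intro nn_integral_add) measurable
  also have "\<dots> = (\<integral>\<^sup>+x. ennreal (p1 x) * ennreal (\<phi> (h x)) \<partial>?P) + (\<integral>\<^sup>+x. ennreal (1 - p1 x) * ennreal (\<phi> (- h x)) \<partial>?P)"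
  proof -
    have q1: "\<forall>x. 0 \<le> p1 x \<and> p1 x \<le> 1" by (rule p01)
    have q2: "\<forall>x. 0 \<le> 1 - p1 x \<and> 1 - p1 x \<le> 1" using p01 by auto
    show ?thesis
      using cond_density[OF P Xm S1 p1m q1 e1' f1m] cond_density[OF P Xm S2 q2m q2 e2 f2m] by (rule arg_cong2[where f="(+)"])
  qed
  also have "\<dots> = (\<integral>\<^sup>+x. ennreal (p1 x) * ennreal (\<phi> (h x)) + ennreal (1 - p1 x) * ennreal (\<phi> (- h x)) \<partial>?P)"
    using p1m q2m f1m f2m by (intro nn_integral_add[symmetric]) measurable
  also have "\<dots> = (\<integral>\<^sup>+x. ennreal (p1 x * \<phi> (h x) + (1 - p1 x) * \<phi> (- h x)) \<partial>?P)"
    using p01 \<phi>0 by (intro nn_integral_cong) (simp add: ennreal_mult ennreal_plus)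
  finally show ?thesis .
qed

lemma improve:
  fixes X :: "'s \<Rightarrow> 'x::topological_space"
  assumes P: "prob_space M" and Xm: "X \<in> borel_measurable M" and Ym: "Y \<in> borel_measurable M"
    and Y: "\<forall>\<omega>\<in>space M. Y \<omega> = 1 \<or> Y \<omega> = -1"
    and cp: "is_cond_prob_pos M X Y p1"
    and \<phi>m: "\<phi> \<in> borel_measurable borel" and \<phi>0: "\<forall>v. 0 \<le> \<phi> v"
    and gm: "g \<in> borel_measurable borel"
    and min: "\<forall>h \<in> borel_measurable borel. risk M X Y \<phi> g \<le> risk M X Y \<phi> h"
    and hm: "h \<in> borel_measurable borel"
    and le: "\<forall>x. p1 x * \<phi> (h x) + (1 - p1 x) * \<phi> (- h x) \<le> p1 x * \<phi> (g x) + (1 - p1 x) * \<phi> (- g x)"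
  shows "AE x in distr M borel X. p1 x * \<phi> (g x) + (1 - p1 x) * \<phi> (- g x) \<le> p1 x * \<phi> (h x) + (1 - p1 x) * \<phi> (- h x)"
proof (rule ccontr)
  interpret prob_space M by fact
  let ?P = "distr M borel X"
  define Cg where "Cg x = p1 x * \<phi> (g x) + (1 - p1 x) * \<phi> (- g x)" for x
  define Ch where "Ch x = p1 x * \<phi> (h x) + (1 - p1 x) * \<phi> (- h x)" for x
  assume na: "\<not> (AE x in ?P. p1 x * \<phi> (g x) + (1 - p1 x) * \<phi> (- g x) \<le> p1 x * \<phi> (h x) + (1 - p1 x) * \<phi> (- h x))"
  have p1m: "p1 \<in> borel_measurable borel" and p01: "\<forall>x. 0 \<le> p1 x \<and> p1 x \<le> 1"
    using cp unfolding is_cond_prob_pos_def by auto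
  note [measurable] = \<phi>m gm hm p1m
  have Ch0: "0 \<le> Ch x" for x unfolding Ch_def using p01 \<phi>0
    by (metis add_nonneg_nonneg diff_ge_0_iff_ge mult_nonneg_nonneg)
  have rg: "risk M X Y \<phi> g = (\<integral>\<^sup>+x. ennreal (Cg x) \<partial>?P)"
    unfolding Cg_def by (rule risk_reduce[OF P Xm Ym Y cp \<phi>m \<phi>0 gm])
  have rh: "risk M X Y \<phi> h = (\<integral>\<^sup>+x. ennreal (Ch x) \<partial>?P)"
    unfolding Ch_def by (rule risk_reduce[OF P Xm Ym Y cp \<phi>m \<phi>0 hm])
  have z: "(\<lambda>_. 0::real) \<in> borel_measurable borel" by simp
  have "risk M X Y \<phi> (\<lambda>_. 0) = (\<integral>\<^sup>+\<omega>. ennreal (\<phi> 0) \<partial>M)" unfolding risk_def by simp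
  also have "\<dots> = ennreal (\<phi> 0)" by (simp add: emeasure_space_1)
  finally have r0: "risk M X Y \<phi> (\<lambda>_. 0) < \<infinity>" by simp
  have "(\<integral>\<^sup>+x. ennreal (Ch x) \<partial>?P) \<le> (\<integral>\<^sup>+x. ennreal (Cg x) \<partial>?P)"
    using le unfolding Ch_def Cg_def by (intro nn_integral_mono) (simp add: ennreal_leI)
  also have "\<dots> \<le> risk M X Y \<phi> (\<lambda>_. 0)" using min z rg by auto
  finally have fin: "(\<integral>\<^sup>+x. ennreal (Ch x) \<partial>?P) \<noteq> \<infinity>" using r0 by auto
  have "(\<integral>\<^sup>+x. ennreal (Ch x) \<partial>?P) < (\<integral>\<^sup>+x. ennreal (Cg x) \<partial>?P)"
  proof (rule nn_integral_less[OF _ _ fin])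
    show "(\<lambda>x. ennreal (Ch x)) \<in> borel_measurable ?P" unfolding Ch_def by measurable
    show "(\<lambda>x. ennreal (Cg x)) \<in> borel_measurable ?P" unfolding Cg_def by measurable
    show "AE x in ?P. ennreal (Ch x) \<le> ennreal (Cg x)"
      using le unfolding Ch_def Cg_def by (simp add: ennreal_leI)
    show "\<not> (AE x in ?P. ennreal (Cg x) \<le> ennreal (Ch x))"
      using na Ch0 unfolding Ch_def Cg_def by (simp add: ennreal_le_iff)
  qed
  then show False using rg rh min hm by (metis leD)
qed



lemma sig_bounds: "0 < sigmoid v" "sigmoid v < 1"
  unfolding sigmoid_def by (auto simp: field_simps add_pos_pos)

lemma sig_neg: "1 / (1 + exp v) = 1 - sigmoid v"
proof -
  have "0 < 1 + exp v" by (simp add: add_pos_pos)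
  then show ?thesis unfolding sigmoid_def by (simp add: exp_minus field_simps)
qed

lemma sig_logit: assumes "0 < w" "w < 1" shows "sigmoid (ln (w / (1 - w))) = w"
  using assms unfolding sigmoid_def by (simp add: exp_minus field_simps)

definition FF :: "real \<Rightarrow> real \<Rightarrow> real" where
  "FF a u = - a * ln u - (1 - a) * ln (1 - u)"

lemma FF_gap:
  assumes "0 \<le> a" "a \<le> 1" "0 < u" "u < 1"
    and wdef: "w = (u + a) / 2"
  shows "FF a u - FF a w \<ge> (a - u)^2 / (4 * w * (1 - w))"
proof -
  have w0: "0 < w" and w1: "w < 1" using assms unfolding wdef by auto
  have l1: "ln u - ln w \<le> (u - w) / w"
  proof -
    have "ln (u / w) \<le> u / w - 1" using ln_le_minus_one[of "u / w"] w0 assms(3) by simp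
    moreover have "ln (u / w) = ln u - ln w" using w0 assms(3) by (intro ln_divide_pos) auto
    moreover have "u / w - 1 = (u - w) / w" using w0 by (simp add: field_simps)
    ultimately show ?thesis by linarith
  qed
  have l2: "ln (1 - u) - ln (1 - w) \<le> (w - u) / (1 - w)"
  proof -
    have "ln ((1 - u) / (1 - w)) \<le> (1 - u) / (1 - w) - 1" using ln_le_minus_one[of "(1 - u) / (1 - w)"] w1 assms(4) by simp
    moreover have "ln ((1 - u) / (1 - w)) = ln (1 - u) - ln (1 - w)" using w1 assms(4) by (intro ln_divide_pos) auto
    moreover have "(1 - u) / (1 - w) - 1 = (w - u) / (1 - w)" using w1 by (simp add: field_simps)
    ultimately show ?thesis by linarith
  qed
  have "FF a u - FF a w = a * (ln w - ln u) + (1 - a) * (ln (1 - w) - ln (1 - u))"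
    unfolding FF_def by (simp add: algebra_simps)
  also have "\<dots> \<ge> a * ((w - u) / w) + (1 - a) * ((u - w) / (1 - w))"
  proof (rule add_mono)
    have e1: "(w - u) / w = - ((u - w) / w)" by (simp add: minus_divide_left)
    have e2: "(u - w) / (1 - w) = - ((w - u) / (1 - w))" by (simp add: minus_divide_left)
    show "a * ((w - u) / w) \<le> a * (ln w - ln u)" using l1 assms(1) unfolding e1
      by (intro mult_left_mono) auto
    show "(1 - a) * ((u - w) / (1 - w)) \<le> (1 - a) * (ln (1 - w) - ln (1 - u))" using l2 assms(2) unfolding e2
      by (intro mult_left_mono) auto
  qed
  moreover have "a * ((w - u) / w) + (1 - a) * ((u - w) / (1 - w)) = (a - u)^2 / (4 * w * (1 - w))"
    using w0 w1 unfolding wdef by (simp add: field_simps power2_eq_square)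
  ultimately show ?thesis by linarith
qed

lemma FF_improve:
  assumes "0 \<le> a" "a \<le> 1" "0 < u" "u < 1"
  shows "FF a ((u + a) / 2) \<le> FF a u" and "u \<noteq> a \<Longrightarrow> FF a ((u + a) / 2) < FF a u"
proof -
  let ?w = "(u + a) / 2"
  have w0: "0 < ?w" and w1: "?w < 1" using assms by auto
  have g: "FF a u - FF a ?w \<ge> (a - u)^2 / (4 * ?w * (1 - ?w))" using FF_gap[OF assms refl] by simp
  have "(a - u)^2 / (4 * ?w * (1 - ?w)) \<ge> 0" using w0 w1 by (intro divide_nonneg_pos) auto
  then show "FF a ?w \<le> FF a u" using g by linarith
  assume "u \<noteq> a"
  then have "(a - u)^2 / (4 * ?w * (1 - ?w)) > 0" using w0 w1 by (intro divide_pos_pos) auto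
  then show "FF a ?w < FF a u" using g by linarith
qed

lemma improve_AE:
  fixes X :: "'s \<Rightarrow> 'x::topological_space"
  assumes P: "prob_space M" and Xm: "X \<in> borel_measurable M" and Ym: "Y \<in> borel_measurable M"
    and Y: "\<forall>\<omega>\<in>space M. Y \<omega> = 1 \<or> Y \<omega> = -1"
    and cp: "is_cond_prob_pos M X Y p1"
    and \<phi>m: "\<phi> \<in> borel_measurable borel" and \<phi>0: "\<forall>v. 0 \<le> \<phi> v"
    and gm: "g \<in> borel_measurable borel"
    and min: "\<forall>h \<in> borel_measurable borel. risk M X Y \<phi> g \<le> risk M X Y \<phi> h"
    and hm: "h \<in> borel_measurable borel"
    and le: "\<forall>x. p1 x * \<phi> (h x) + (1 - p1 x) * \<phi> (- h x) \<le> p1 x * \<phi> (g x) + (1 - p1 x) * \<phi> (- g x)"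
    and st: "\<forall>x. Q x \<longrightarrow> p1 x * \<phi> (h x) + (1 - p1 x) * \<phi> (- h x) < p1 x * \<phi> (g x) + (1 - p1 x) * \<phi> (- g x)"
  shows "AE x in distr M borel X. \<not> Q x"
  using improve[OF P Xm Ym Y cp \<phi>m \<phi>0 gm min hm le]
  by (rule eventually_mono) (use st in force)

lemma lin_comb:
  fixes x y c d A B p :: real
  assumes "x = - c * A - d * B" "y = - c * B - d * A" "c + d = 1"
  shows "p * x + (1 - p) * y = - (p * c + (1 - p) * d) * A - (1 - (p * c + (1 - p) * d)) * B"
proof -
  have d: "d = 1 - c" using assms(3) by simp
  show ?thesis unfolding assms(1) assms(2) d by (simp add: algebra_simps)
qed

lemma sa_eq: "p * (1 - \<alpha>/2) + (1 - p) * (\<alpha>/2) = s_alpha \<alpha> p"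
  unfolding s_alpha_def by (simp add: field_simps)

lemma C_LR: "p * phi_LR v + (1 - p) * phi_LR (- v) = FF p (sigmoid v)"
proof -
  have a: "1 / (1 + exp (- v)) = sigmoid v" unfolding sigmoid_def by simp
  have b: "1 / (1 + exp v) = 1 - sigmoid v" by (rule sig_neg)
  have "phi_LR v = - 1 * ln (sigmoid v) - 0 * ln (1 - sigmoid v)" unfolding phi_LR_def a by simp
  moreover have "phi_LR (- v) = - 1 * ln (1 - sigmoid v) - 0 * ln (sigmoid v)" unfolding phi_LR_def using b by simp
  ultimately show ?thesis using lin_comb[of _ 1 _ 0 _ _ p] unfolding FF_def by simp
qed

lemma C_LS: "p * phi_LS \<alpha> v + (1 - p) * phi_LS \<alpha> (- v) = FF (s_alpha \<alpha> p) (sigmoid v)"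
proof -
  have a: "1 / (1 + exp (- v)) = sigmoid v" unfolding sigmoid_def by simp
  have b: "1 / (1 + exp v) = 1 - sigmoid v" by (rule sig_neg)
  have "phi_LS \<alpha> v = - (1 - \<alpha>/2) * ln (sigmoid v) - (\<alpha>/2) * ln (1 - sigmoid v)"
    unfolding phi_LS_def a b by simp
  moreover have "phi_LS \<alpha> (- v) = - (1 - \<alpha>/2) * ln (1 - sigmoid v) - (\<alpha>/2) * ln (sigmoid v)"
    unfolding phi_LS_def using a b by simp
  ultimately show ?thesis using lin_comb[of _ "1 - \<alpha>/2" _ "\<alpha>/2" _ _ p] unfolding FF_def sa_eq by simp
qed

lemma C_MLS: "p * phi_MLS \<alpha> v + (1 - p) * phi_MLS \<alpha> (- v) = FF (s_alpha \<alpha> p) (s_alpha \<alpha> (sigmoid v))"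
proof -
  have a: "(1 - \<alpha>) / (1 + exp (- v)) + \<alpha>/2 = s_alpha \<alpha> (sigmoid v)" unfolding sigmoid_def s_alpha_def by simp
  have b: "(1 - \<alpha>) / (1 + exp v) + \<alpha>/2 = 1 - s_alpha \<alpha> (sigmoid v)"
  proof -
    have "(1 - \<alpha>) / (1 + exp v) = (1 - \<alpha>) * (1 / (1 + exp v))" by simp
    also have "\<dots> = (1 - \<alpha>) * (1 - sigmoid v)" by (simp only: sig_neg)
    finally show ?thesis unfolding s_alpha_def by (simp add: algebra_simps)
  qed
  have "phi_MLS \<alpha> v = - (1 - \<alpha>/2) * ln (s_alpha \<alpha> (sigmoid v)) - (\<alpha>/2) * ln (1 - s_alpha \<alpha> (sigmoid v))"
    unfolding phi_MLS_def a b by simp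
  moreover have "phi_MLS \<alpha> (- v) = - (1 - \<alpha>/2) * ln (1 - s_alpha \<alpha> (sigmoid v)) - (\<alpha>/2) * ln (s_alpha \<alpha> (sigmoid v))"
    unfolding phi_MLS_def using a b by simp
  ultimately show ?thesis using lin_comb[of _ "1 - \<alpha>/2" _ "\<alpha>/2" _ _ p] unfolding FF_def sa_eq by simp
qed

lemma C_LSQ: "p * phi_LSQ v + (1 - p) * phi_LSQ (- v) = p * (1 - sigmoid v)^2 / 2 + (1 - p) * (sigmoid v)^2 / 2"
proof -
  have a: "1 / (1 + exp (- v)) = sigmoid v" unfolding sigmoid_def by simp
  have b: "1 / (1 + exp v) = 1 - sigmoid v" by (rule sig_neg)
  have "phi_LSQ v = (1 / (1 + exp v))^2 / 2" unfolding phi_LSQ_def by (simp add: power_divide)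
  then have e1: "phi_LSQ v = (1 - sigmoid v)^2 / 2" unfolding b .
  have "phi_LSQ (- v) = (1 / (1 + exp (- v)))^2 / 2" unfolding phi_LSQ_def by (simp add: power_divide)
  then have e2: "phi_LSQ (- v) = (sigmoid v)^2 / 2" unfolding a .
  show ?thesis unfolding e1 e2 by simp
qed



lemma FF_nonneg: assumes "0 \<le> a" "a \<le> 1" "0 < u" "u < 1" shows "0 \<le> FF a u"
proof -
  have "ln u \<le> 0" "ln (1 - u) \<le> 0" using assms by auto
  then have "0 \<le> - a * ln u" "0 \<le> - (1 - a) * ln (1 - u)" using assms
    by (auto simp: mult_nonneg_nonpos mult_nonpos_nonpos)
  then show ?thesis unfolding FF_def by linarith
qed

lemma sa_bounds: assumes "0 \<le> \<alpha>" "\<alpha> < 1" "0 < u" "u < 1"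
  shows "0 < s_alpha \<alpha> u" "s_alpha \<alpha> u < 1"
proof -
  have "0 < (1 - \<alpha>) * u" "(1 - \<alpha>) * u < 1 - \<alpha>" using assms by auto
  then show "0 < s_alpha \<alpha> u" "s_alpha \<alpha> u < 1" unfolding s_alpha_def using assms by linarith+
qed

lemma sa_bounds2: assumes "0 \<le> \<alpha>" "\<alpha> < 1" "0 \<le> u" "u \<le> 1"
  shows "0 \<le> s_alpha \<alpha> u" "s_alpha \<alpha> u \<le> 1"
proof -
  have "0 \<le> (1 - \<alpha>) * u" "(1 - \<alpha>) * u \<le> 1 - \<alpha>" using assms by (auto simp: mult_left_le)
  then show "0 \<le> s_alpha \<alpha> u" "s_alpha \<alpha> u \<le> 1" unfolding s_alpha_def using assms by linarith+
qed

lemma phi_LR_nonneg: "0 \<le> phi_LR v"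
  using C_LR[of 1 v] FF_nonneg[of 1 "sigmoid v"] sig_bounds[of v] by simp

lemma phi_LS_nonneg: assumes "0 \<le> \<alpha>" "\<alpha> < 1" shows "0 \<le> phi_LS \<alpha> v"
  using C_LS[of 1 \<alpha> v] FF_nonneg[of "s_alpha \<alpha> 1" "sigmoid v"] sig_bounds[of v] sa_bounds2[OF assms, of 1] by simp

lemma phi_MLS_nonneg: assumes "0 \<le> \<alpha>" "\<alpha> < 1" shows "0 \<le> phi_MLS \<alpha> v"
  using C_MLS[of 1 \<alpha> v] FF_nonneg[of "s_alpha \<alpha> 1" "s_alpha \<alpha> (sigmoid v)"] sig_bounds[of v]
    sa_bounds2[OF assms, of 1] sa_bounds[OF assms, of "sigmoid v"] by simp

lemma phi_LSQ_nonneg: "0 \<le> phi_LSQ v"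
  unfolding phi_LSQ_def by simp

lemma phi_LR_meas: "phi_LR \<in> borel_measurable borel"
proof -
  have e: "phi_LR = (\<lambda>v. - ln (1 / (1 + exp (- v))))" by (rule ext) (simp add: phi_LR_def)
  show ?thesis unfolding e by measurable
qed

lemma phi_LS_meas: "phi_LS \<alpha> \<in> borel_measurable borel"
proof -
  have "phi_LS \<alpha> = (\<lambda>v. - (1 - \<alpha>/2) * ln (1 / (1 + exp (- v))) - (\<alpha>/2) * ln (1 / (1 + exp v)))"
    by (rule ext) (simp add: phi_LS_def)
  then show ?thesis by (simp only:) measurable
qed

lemma phi_MLS_meas: "phi_MLS \<alpha> \<in> borel_measurable borel"
proof -
  have "phi_MLS \<alpha> = (\<lambda>v. - (1 - \<alpha>/2) * ln ((1 - \<alpha>) / (1 + exp (- v)) + \<alpha>/2)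
                   - (\<alpha>/2) * ln ((1 - \<alpha>) / (1 + exp v) + \<alpha>/2))"
    by (rule ext) (simp add: phi_MLS_def)
  then show ?thesis by (simp only:) measurable
qed

lemma phi_LSQ_meas: "phi_LSQ \<in> borel_measurable borel"
proof -
  have e: "phi_LSQ = (\<lambda>v. 1 / (2 * (1 + exp v)^2))" by (rule ext) (simp add: phi_LSQ_def)
  show ?thesis unfolding e by measurable
qed



lemma LSQ_gap: "(p::real) * (1 - (s + p)/2)^2 / 2 + (1 - p) * ((s + p)/2)^2 / 2
   = p * (1 - s)^2 / 2 + (1 - p) * s^2 / 2 - 3 * (s - p)^2 / 8"
  by (simp add: field_simps power2_eq_square)

lemma case_generic:
  fixes X :: "'s \<Rightarrow> 'x::topological_space"
  assumes P: "prob_space M" and Xm: "X \<in> borel_measurable M" and Ym: "Y \<in> borel_measurable M"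
    and Y: "\<forall>\<omega>\<in>space M. Y \<omega> = 1 \<or> Y \<omega> = -1"
    and cp: "is_cond_prob_pos M X Y p1"
    and \<phi>m: "\<phi> \<in> borel_measurable borel" and \<phi>0: "\<forall>v. 0 \<le> \<phi> v"
    and gm: "g \<in> borel_measurable borel"
    and min: "\<forall>h \<in> borel_measurable borel. risk M X Y \<phi> g \<le> risk M X Y \<phi> h"
    and tm: "T \<in> borel_measurable borel" and t01: "\<forall>p. 0 \<le> p \<and> p \<le> 1 \<longrightarrow> 0 \<le> T p \<and> T p \<le> 1"
    and imp: "\<And>p s. 0 \<le> p \<Longrightarrow> p \<le> 1 \<Longrightarrow> 0 < s \<Longrightarrow> s < 1 \<Longrightarrow> 0 \<le> T p \<Longrightarrow> T p \<le> 1 \<Longrightarrow>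
        (\<forall>v w. sigmoid v = s \<longrightarrow> sigmoid w = (s + T p) / 2 \<longrightarrow>
           p * \<phi> w + (1 - p) * \<phi> (- w) \<le> p * \<phi> v + (1 - p) * \<phi> (- v) \<and>
           (s \<noteq> T p \<longrightarrow> p * \<phi> w + (1 - p) * \<phi> (- w) < p * \<phi> v + (1 - p) * \<phi> (- v)))"
  shows "AE x in distr M borel X. sigmoid (g x) = T (p1 x)"
proof -
  have p1m: "p1 \<in> borel_measurable borel" and p01: "\<forall>x. 0 \<le> p1 x \<and> p1 x \<le> 1"
    using cp unfolding is_cond_prob_pos_def by auto
  define w where "w x = (sigmoid (g x) + T (p1 x)) / 2" for x
  define h where "h x = ln (w x / (1 - w x))" for x
  have w01: "0 < w x" "w x < 1" for x
  proof -
    have "0 \<le> T (p1 x)" "T (p1 x) \<le> 1" using t01 p01 by auto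
    then show "0 < w x" "w x < 1" using sig_bounds[of "g x"] unfolding w_def by auto
  qed
  have sh: "sigmoid (h x) = w x" for x unfolding h_def using w01 by (rule sig_logit)
  have sgm: "sigmoid \<in> borel_measurable borel"
  proof -
    have e: "sigmoid = (\<lambda>v. 1 / (1 + exp (- v)))" by (rule ext) (simp add: sigmoid_def)
    show ?thesis unfolding e by measurable
  qed
  have sm: "(\<lambda>x. sigmoid (g x)) \<in> borel_measurable borel" using measurable_compose[OF gm sgm] by (simp add: comp_def)
  have Tm: "(\<lambda>x. T (p1 x)) \<in> borel_measurable borel" using measurable_compose[OF p1m tm] by (simp add: comp_def)
  have wm: "w \<in> borel_measurable borel"
  proof -
    have e: "w = (\<lambda>x. (sigmoid (g x) + T (p1 x)) / 2)" by (rule ext) (simp add: w_def)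
    show ?thesis unfolding e using sm Tm by (intro borel_measurable_divide borel_measurable_add) auto
  qed
  have hm: "h \<in> borel_measurable borel"
  proof -
    have e: "h = (\<lambda>x. ln (w x / (1 - w x)))" by (rule ext) (simp add: h_def)
    show ?thesis unfolding e using wm by (intro borel_measurable_ln borel_measurable_divide borel_measurable_diff) auto
  qed
  have key: "p1 x * \<phi> (h x) + (1 - p1 x) * \<phi> (- h x) \<le> p1 x * \<phi> (g x) + (1 - p1 x) * \<phi> (- g x) \<and>
           (sigmoid (g x) \<noteq> T (p1 x) \<longrightarrow> p1 x * \<phi> (h x) + (1 - p1 x) * \<phi> (- h x) < p1 x * \<phi> (g x) + (1 - p1 x) * \<phi> (- g x))" for x
  proof -
    have a: "0 \<le> p1 x" "p1 x \<le> 1" using p01 by auto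
    have b: "0 \<le> T (p1 x)" "T (p1 x) \<le> 1" using t01 a by auto
    have c: "sigmoid (h x) = (sigmoid (g x) + T (p1 x)) / 2" using sh[of x] unfolding w_def .
    show ?thesis using imp[OF a sig_bounds[of "g x"] b, rule_format, OF refl c] .
  qed
  have "AE x in distr M borel X. \<not> (sigmoid (g x) \<noteq> T (p1 x))"
  proof (rule improve_AE[OF P Xm Ym Y cp \<phi>m \<phi>0 gm min hm])
    show "\<forall>x. p1 x * \<phi> (h x) + (1 - p1 x) * \<phi> (- h x) \<le> p1 x * \<phi> (g x) + (1 - p1 x) * \<phi> (- g x)"
      using key by blast
    show "\<forall>x. sigmoid (g x) \<noteq> T (p1 x) \<longrightarrow> p1 x * \<phi> (h x) + (1 - p1 x) * \<phi> (- h x) < p1 x * \<phi> (g x) + (1 - p1 x) * \<phi> (- g x)"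
      using key by blast
  qed
  then show ?thesis by simp
qed

lemma sa_mid: "s_alpha \<alpha> ((s + p) / 2) = (s_alpha \<alpha> s + s_alpha \<alpha> p) / 2"
  unfolding s_alpha_def by (simp add: field_simps)

lemma sa_inj: assumes "\<alpha> < 1" "s_alpha \<alpha> s = s_alpha \<alpha> p" shows "s = p"
  using assms unfolding s_alpha_def by simp

lemma sa_meas: "s_alpha \<alpha> \<in> borel_measurable borel"
proof -
  have e: "s_alpha \<alpha> = (\<lambda>u. (1 - \<alpha>) * u + \<alpha>/2)" by (rule ext) (simp add: s_alpha_def)
  show ?thesis unfolding e by measurable
qed

lemma main_all:
  fixes X :: "'s \<Rightarrow> 'x::topological_space"
  assumes P: "prob_space M" and Xm: "X \<in> borel_measurable M" and Ym: "Y \<in> borel_measurable M"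
    and Y: "\<forall>\<omega>\<in>space M. Y \<omega> = 1 \<or> Y \<omega> = -1"
    and cp: "is_cond_prob_pos M X Y p1"
    and a0: "0 \<le> \<alpha>" and a1: "\<alpha> < 1"
    and gm: "g \<in> borel_measurable borel"
    and min: "\<forall>h \<in> borel_measurable borel. risk M X Y \<phi> g \<le> risk M X Y \<phi> h"
  shows "\<phi> = phi_LR \<Longrightarrow> AE x in distr M borel X. sigmoid (g x) = p1 x"
    and "\<phi> = phi_MLS \<alpha> \<Longrightarrow> AE x in distr M borel X. sigmoid (g x) = p1 x"
    and "\<phi> = phi_LSQ \<Longrightarrow> AE x in distr M borel X. sigmoid (g x) = p1 x"
    and "\<phi> = phi_LS \<alpha> \<Longrightarrow> AE x in distr M borel X. s_alpha_inv \<alpha> (sigmoid (g x)) = p1 x"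
proof -
  have idm: "(\<lambda>p::real. p) \<in> borel_measurable borel" by simp
  have id01: "\<forall>p::real. 0 \<le> p \<and> p \<le> 1 \<longrightarrow> 0 \<le> p \<and> p \<le> 1" by simp
  {
    assume e: "\<phi> = phi_LR"
    have "AE x in distr M borel X. sigmoid (g x) = (\<lambda>p. p) (p1 x)"
    proof (rule case_generic[OF P Xm Ym Y cp _ _ gm min idm id01])
      show "\<phi> \<in> borel_measurable borel" unfolding e by (rule phi_LR_meas)
      show "\<forall>v. 0 \<le> \<phi> v" unfolding e using phi_LR_nonneg by simp
      fix p s :: real
      assume h: "0 \<le> p" "p \<le> 1" "0 < s" "s < 1"
      show "\<forall>v w. sigmoid v = s \<longrightarrow> sigmoid w = (s + p) / 2 \<longrightarrow>
           p * \<phi> w + (1 - p) * \<phi> (- w) \<le> p * \<phi> v + (1 - p) * \<phi> (- v) \<and>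
           (s \<noteq> p \<longrightarrow> p * \<phi> w + (1 - p) * \<phi> (- w) < p * \<phi> v + (1 - p) * \<phi> (- v))"
      proof (intro allI impI)
        fix v w assume sv: "sigmoid v = s" and sw: "sigmoid w = (s + p) / 2"
        show "p * \<phi> w + (1 - p) * \<phi> (- w) \<le> p * \<phi> v + (1 - p) * \<phi> (- v) \<and>
           (s \<noteq> p \<longrightarrow> p * \<phi> w + (1 - p) * \<phi> (- w) < p * \<phi> v + (1 - p) * \<phi> (- v))"
          unfolding e C_LR sv sw using FF_improve[OF h] by auto
      qed
    qed
    then show "AE x in distr M borel X. sigmoid (g x) = p1 x" by simp
  }
  {
    assume e: "\<phi> = phi_MLS \<alpha>"
    have "AE x in distr M borel X. sigmoid (g x) = (\<lambda>p. p) (p1 x)"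
    proof (rule case_generic[OF P Xm Ym Y cp _ _ gm min idm id01])
      show "\<phi> \<in> borel_measurable borel" unfolding e by (rule phi_MLS_meas)
      show "\<forall>v. 0 \<le> \<phi> v" unfolding e using phi_MLS_nonneg[OF a0 a1] by simp
      fix p s :: real
      assume h: "0 \<le> p" "p \<le> 1" "0 < s" "s < 1"
      have h': "0 \<le> s_alpha \<alpha> p" "s_alpha \<alpha> p \<le> 1" "0 < s_alpha \<alpha> s" "s_alpha \<alpha> s < 1"
        using sa_bounds[OF a0 a1 h(3,4)] sa_bounds2[OF a0 a1 h(1,2)] by auto
      have ne: "s \<noteq> p \<Longrightarrow> s_alpha \<alpha> s \<noteq> s_alpha \<alpha> p" using sa_inj[OF a1] by blast
      show "\<forall>v w. sigmoid v = s \<longrightarrow> sigmoid w = (s + p) / 2 \<longrightarrow>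
           p * \<phi> w + (1 - p) * \<phi> (- w) \<le> p * \<phi> v + (1 - p) * \<phi> (- v) \<and>
           (s \<noteq> p \<longrightarrow> p * \<phi> w + (1 - p) * \<phi> (- w) < p * \<phi> v + (1 - p) * \<phi> (- v))"
      proof (intro allI impI)
        fix v w assume sv: "sigmoid v = s" and sw: "sigmoid w = (s + p) / 2"
        show "p * \<phi> w + (1 - p) * \<phi> (- w) \<le> p * \<phi> v + (1 - p) * \<phi> (- v) \<and>
           (s \<noteq> p \<longrightarrow> p * \<phi> w + (1 - p) * \<phi> (- w) < p * \<phi> v + (1 - p) * \<phi> (- v))"
          unfolding e C_MLS sv sw sa_mid using FF_improve[OF h'] ne by auto
      qed
    qed
    then show "AE x in distr M borel X. sigmoid (g x) = p1 x" by simp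
  }
  {
    assume e: "\<phi> = phi_LSQ"
    have "AE x in distr M borel X. sigmoid (g x) = (\<lambda>p. p) (p1 x)"
    proof (rule case_generic[OF P Xm Ym Y cp _ _ gm min idm id01])
      show "\<phi> \<in> borel_measurable borel" unfolding e by (rule phi_LSQ_meas)
      show "\<forall>v. 0 \<le> \<phi> v" unfolding e using phi_LSQ_nonneg by simp
      fix p s :: real
      assume h: "0 \<le> p" "p \<le> 1" "0 < s" "s < 1"
      have g1: "3 * (s - p)^2 / 8 \<ge> 0" by simp
      have g2: "s \<noteq> p \<Longrightarrow> 3 * (s - p)^2 / 8 > 0" by simp
      show "\<forall>v w. sigmoid v = s \<longrightarrow> sigmoid w = (s + p) / 2 \<longrightarrow>
           p * \<phi> w + (1 - p) * \<phi> (- w) \<le> p * \<phi> v + (1 - p) * \<phi> (- v) \<and>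
           (s \<noteq> p \<longrightarrow> p * \<phi> w + (1 - p) * \<phi> (- w) < p * \<phi> v + (1 - p) * \<phi> (- v))"
      proof (intro allI impI)
        fix v w assume sv: "sigmoid v = s" and sw: "sigmoid w = (s + p) / 2"
        show "p * \<phi> w + (1 - p) * \<phi> (- w) \<le> p * \<phi> v + (1 - p) * \<phi> (- v) \<and>
           (s \<noteq> p \<longrightarrow> p * \<phi> w + (1 - p) * \<phi> (- w) < p * \<phi> v + (1 - p) * \<phi> (- v))"
          unfolding e C_LSQ sv sw using LSQ_gap[of p s] g1 g2 by auto
      qed
    qed
    then show "AE x in distr M borel X. sigmoid (g x) = p1 x" by simp
  }
  {
    assume e: "\<phi> = phi_LS \<alpha>"
    have "AE x in distr M borel X. sigmoid (g x) = s_alpha \<alpha> (p1 x)"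
    proof (rule case_generic[OF P Xm Ym Y cp _ _ gm min sa_meas])
      show "\<phi> \<in> borel_measurable borel" unfolding e by (rule phi_LS_meas)
      show "\<forall>v. 0 \<le> \<phi> v" unfolding e using phi_LS_nonneg[OF a0 a1] by simp
      show "\<forall>p. 0 \<le> p \<and> p \<le> 1 \<longrightarrow> 0 \<le> s_alpha \<alpha> p \<and> s_alpha \<alpha> p \<le> 1"
        using sa_bounds2[OF a0 a1] by blast
      fix p s :: real
      assume h: "0 \<le> p" "p \<le> 1" "0 < s" "s < 1" "0 \<le> s_alpha \<alpha> p" "s_alpha \<alpha> p \<le> 1"
      show "\<forall>v w. sigmoid v = s \<longrightarrow> sigmoid w = (s + s_alpha \<alpha> p) / 2 \<longrightarrow>
           p * \<phi> w + (1 - p) * \<phi> (- w) \<le> p * \<phi> v + (1 - p) * \<phi> (- v) \<and>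
           (s \<noteq> s_alpha \<alpha> p \<longrightarrow> p * \<phi> w + (1 - p) * \<phi> (- w) < p * \<phi> v + (1 - p) * \<phi> (- v))"
      proof (intro allI impI)
        fix v w assume sv: "sigmoid v = s" and sw: "sigmoid w = (s + s_alpha \<alpha> p) / 2"
        show "p * \<phi> w + (1 - p) * \<phi> (- w) \<le> p * \<phi> v + (1 - p) * \<phi> (- v) \<and>
           (s \<noteq> s_alpha \<alpha> p \<longrightarrow> p * \<phi> w + (1 - p) * \<phi> (- w) < p * \<phi> v + (1 - p) * \<phi> (- v))"
          unfolding e C_LS sv sw using FF_improve[OF h(5,6,3,4)] by auto
      qed
    qed
    then show "AE x in distr M borel X. s_alpha_inv \<alpha> (sigmoid (g x)) = p1 x"
    proof (rule eventually_mono)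
      fix x assume "sigmoid (g x) = s_alpha \<alpha> (p1 x)"
      then show "s_alpha_inv \<alpha> (sigmoid (g x)) = p1 x"
        using a1 unfolding s_alpha_inv_def s_alpha_def by (simp add: field_simps)
    qed
  }
qed


theorem corollary1:
  fixes M :: "'s measure" and X :: "'s \<Rightarrow> real ^ 'd" and Y :: "'s \<Rightarrow> real"
    and p1 :: "real ^ 'd \<Rightarrow> real" and \<alpha> :: real and \<phi> :: "real \<Rightarrow> real"
    and g :: "real ^ 'd \<Rightarrow> real"
  assumes "prob_space M"
    and "X \<in> borel_measurable M" and "Y \<in> borel_measurable M"
    and "\<forall>\<omega>\<in>space M. Y \<omega> = 1 \<or> Y \<omega> = -1"
    and "is_cond_prob_pos M X Y p1"
    and "0 \<le> \<alpha>" and "\<alpha> < 1"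
    and "\<phi> \<in> {phi_LR, phi_LS \<alpha>, phi_MLS \<alpha>, phi_LSQ}"
    and "g \<in> borel_measurable borel"
    and "\<forall>h \<in> borel_measurable borel. risk M X Y \<phi> g \<le> risk M X Y \<phi> h"
  shows "(\<phi> \<in> {phi_LR, phi_MLS \<alpha>, phi_LSQ} \<longrightarrow>
            (AE x in distr M borel X. sigmoid (g x) = p1 x))
       \<and> (\<phi> = phi_LS \<alpha> \<longrightarrow>
            (AE x in distr M borel X. s_alpha_inv \<alpha> (sigmoid (g x)) = p1 x))"
  proof -
  note A = main_all[OF assms(1-7) assms(9) assms(10)]
  show ?thesis using A assms(8) by auto
qed

end
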